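(* For odd $N\ge3$, let $K=\tilde F(N)$, $L=N(N+1)$, $n=N$, let $C^0,\dots,C^{K-1}$ be the sequences $c^m_i=\omega_{N+1}^{\pi_m(\langle i\rangle_N)\cdot i}$ ($0\le i<L$) built from a $K\times N$ circular Florentine rectangle with rows $\pi_0,\dots,\pi_{K-1}$, let $\theta_{\max}$ be their maximum periodic correlation magnitude (over all autocorrelations at shifts $0<\tau<L$ and all cross-correlations between distinct sequences at shifts $0\le\tau<L$), and let $\theta_{opti}=L\sqrt{\frac{(K-1)L+n}{(L-n)(KL-1)}}$. Then $\theta_{\max}/\theta_{opti}\to1$ as $N\to\infty$ through each of the following sets of integers: (1) $N=p$ an odd prime; (2) $N=p(p+k)$ where $k$ is a fixed positive integer and $p$, $p+k$ are odd primes; (3) $N=\prod_{i=1}^h(m+k_i)$, where $\mathcal{H}=\{k_1,\dots,k_h\}$ is a fixed admissible set of distinct nonnegative integers and $m+k_1,\dots,m+k_h$ are odd primes.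
   Context: $\omega_n=e^{2\pi\sqrt{-1}/n}$. An $M\times N$ circular Florentine rectangle (CFR) over $\mathbb{Z}_N$ is an $M\times N$ array whose rows $\pi_i:\mathbb{Z}_N\to\mathbb{Z}_N$ are permutations such that for every $m\in\mathbb{Z}_N\setminus\{0\}$ and all $i,j,x,y$: $(\pi_i(x),\pi_i(x+m))=(\pi_j(y),\pi_j(y+m))$ (indices mod $N$) iff $i=j$ and $x=y$. $\tilde F(N)$ is the largest $M$ for which an $M\times N$ CFR exists. Periodic correlation: $\theta_{C,D}(\tau)=\sum_{t=0}^{L-1}c_td^*_{\langle t+\tau\rangle_L}$. A finite set $\mathcal{H}$ of integers is admissible if for every prime $q$ the elements of $\mathcal{H}$ do not cover all residue classes modulo $q$. *)

theory Defs
  imports "HOL-Analysis.Analysis" "HOL-Computational_Algebra.Primes"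
begin

definition omega :: "nat \<Rightarrow> complex" where
  "omega n = exp (2 * of_real pi * \<i> / of_nat n)"

definition cfr :: "nat \<Rightarrow> nat \<Rightarrow> (nat \<Rightarrow> nat \<Rightarrow> nat) \<Rightarrow> bool" where
  "cfr M N \<pi> \<longleftrightarrow>
     (\<forall>i<M. bij_betw (\<pi> i) {..<N} {..<N}) \<and>
     (\<forall>m\<in>{1..<N}. \<forall>i<M. \<forall>j<M. \<forall>x<N. \<forall>y<N.
        ((\<pi> i x, \<pi> i ((x + m) mod N)) = (\<pi> j y, \<pi> j ((y + m) mod N))
          \<longleftrightarrow> (i = j \<and> x = y)))"

definition cfr_max :: "nat \<Rightarrow> nat" where
  "cfr_max N = Max {M. \<exists>\<pi>. cfr M N \<pi>}"

definition pcorr :: "nat \<Rightarrow> (nat \<Rightarrow> complex) \<Rightarrow> (nat \<Rightarrow> complex) \<Rightarrow> nat \<Rightarrow> complex" where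
  "pcorr L C D \<tau> = (\<Sum>t<L. C t * cnj (D ((t + \<tau>) mod L)))"

definition cfr_seq :: "nat \<Rightarrow> (nat \<Rightarrow> nat \<Rightarrow> nat) \<Rightarrow> nat \<Rightarrow> nat \<Rightarrow> complex" where
  "cfr_seq N \<pi> m i = omega (N + 1) ^ (\<pi> m (i mod N) * i)"

definition theta_max :: "nat \<Rightarrow> nat \<Rightarrow> (nat \<Rightarrow> nat \<Rightarrow> nat) \<Rightarrow> real" where
  "theta_max N K \<pi> = (let L = N * (N + 1) in
     Max ({cmod (pcorr L (cfr_seq N \<pi> m) (cfr_seq N \<pi> m) \<tau>) | m \<tau>. m < K \<and> 0 < \<tau> \<and> \<tau> < L}
        \<union> {cmod (pcorr L (cfr_seq N \<pi> m) (cfr_seq N \<pi> m') \<tau>) | m m' \<tau>.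
              m < K \<and> m' < K \<and> m \<noteq> m' \<and> \<tau> < L}))"

definition theta_opti :: "nat \<Rightarrow> nat \<Rightarrow> nat \<Rightarrow> real" where
  "theta_opti K L n = real L * sqrt (((real K - 1) * real L + real n) /
                                     ((real L - real n) * (real K * real L - 1)))"

text \<open>theta_max / theta_opti \<rightarrow> 1 as N \<rightarrow> \<infinity> through S, for every choice of
  F(N) x N CFR (uniformly, which is equivalent since there are finitely many).\<close>
definition ratio_tends_to_1 :: "nat set \<Rightarrow> bool" where
  "ratio_tends_to_1 S \<longleftrightarrow>
     (\<forall>\<epsilon>>0. \<exists>N0. \<forall>N\<in>S. N \<ge> N0 \<longrightarrow>
        (\<forall>\<pi>. cfr (cfr_max N) N \<pi> \<longrightarrow>
           \<bar>theta_max N (cfr_max N) \<pi> / theta_opti (cfr_max N) (N * (N + 1)) N - 1\<bar> < \<epsilon>))"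

definition admissible :: "nat set \<Rightarrow> bool" where
  "admissible H \<longleftrightarrow> finite H \<and>
     (\<forall>q::nat. prime q \<longrightarrow> \<not> (\<forall>r<q. \<exists>k\<in>H. k mod q = r))"

end

theory Submission imports Defs "HOL-Number_Theory.Number_Theory" begin

definition zeta :: "nat \<Rightarrow> int \<Rightarrow> complex" where
  "zeta n k = cis (2 * pi * of_int k / of_nat n)"

lemma zeta_add: "zeta n (a + b) = zeta n a * zeta n b"
  by (simp add: zeta_def cis_mult add_divide_distrib distrib_left)

lemma zeta_mult_n: assumes "n > 0" shows "zeta n (int n * j) = 1"
proof -
  have "2 * pi * of_int (int n * j) / of_nat n = 2 * pi * of_int j" using assms by simp
  thus ?thesis unfolding zeta_def by simp
qed

lemma zeta_cong: assumes "n > 0" "[a = b] (mod int n)" shows "zeta n a = zeta n b"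
proof -
  obtain j where "a = b + int n * j" using assms(2)
    by (metis cong_iff_lin cong_sym)
  thus ?thesis using zeta_add zeta_mult_n[OF assms(1)] by simp
qed

lemma norm_zeta [simp]: "norm (zeta n a) = 1"
  by (simp add: zeta_def)

lemma cnj_zeta: "cnj (zeta n a) = zeta n (- a)"
  by (simp add: zeta_def cis_cnj)

lemma omega_pow: "omega n ^ k = zeta n (int k)"
  unfolding omega_def zeta_def cis_conv_exp
  by (simp add: exp_of_nat_mult[symmetric] mult_ac)

lemma zeta_pow: "zeta n a ^ k = zeta n (a * int k)"
  by (simp add: zeta_def Complex.DeMoivre mult_ac)

lemma zeta_eq_1: assumes "n > 0" "zeta n c = 1" shows "int n dvd c"
proof -
  have "cos (2 * pi * of_int c / of_nat n) = 1" using assms(2) unfolding zeta_def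
    by (metis cis.sel(1) one_complex.sel(1))
  from cos_one_2pi_int[THEN iffD1, OF this]
  obtain k :: int where k: "2 * pi * of_int c / of_nat n = of_int k * 2 * pi" by blast
  hence "real_of_int c = real_of_int (k * int n)" using assms(1) pi_gt_zero
    by (simp add: field_simps)
  hence "c = k * int n" using of_int_eq_iff by blast
  thus ?thesis by simp
qed

lemma zeta_geom: assumes "n > 0"
  shows "(\<Sum>s<n. zeta n (c * int s)) = (if int n dvd c then of_nat n else 0)"
proof (cases "int n dvd c")
  case True
  then obtain j where "c = int n * j" by blast
  hence "zeta n (c * int s) = 1" for s using zeta_mult_n[OF assms, of "j * int s"]
    by (simp add: mult_ac)
  thus ?thesis using True by simp
next
  case False
  hence ne: "zeta n c \<noteq> 1" using zeta_eq_1[OF assms] by blast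
  have "(\<Sum>s<n. zeta n (c * int s)) = (\<Sum>s<n. zeta n c ^ s)"
    by (simp add: zeta_pow)
  also have "\<dots> = (zeta n c ^ n - 1) / (zeta n c - 1)"
    using geometric_sum[OF ne] .
  also have "zeta n c ^ n = 1" using zeta_mult_n[OF assms, of c]
    by (simp add: zeta_pow mult_ac)
  finally show ?thesis using False by simp
qed

lemma sum_split_nat: "(\<Sum>t<N*(k::nat). h t) = (\<Sum>s<k. \<Sum>a<N. h (s*N + a))"
proof -
  have "(\<Sum>t<N*k. h t) = (\<Sum>s<k. sum h {s*N..<s*N+N})"
    using sum.nat_group[of h N k] by (simp add: mult.commute)
  also have "\<dots> = (\<Sum>s<k. \<Sum>a<N. h (s*N + a))"
  proof (rule sum.cong[OF refl])
    fix s
    have "{s*N..<s*N+N} = (\<lambda>a. s*N + a) ` {..<N}"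
      by (simp add: image_add_atLeastLessThan lessThan_atLeast0 add.commute)
    thus "sum h {s*N..<s*N+N} = (\<Sum>a<N. h (s*N + a))"
      by (simp add: sum.reindex)
  qed
  finally show ?thesis .
qed

lemma corr_formula:
  fixes N \<tau> :: nat and f g :: "nat \<Rightarrow> nat"
  assumes N: "N \<ge> 1" and f: "\<forall>a<N. f a < N" and g: "\<forall>a<N. g a < N"
  shows "pcorr (N*(N+1)) (\<lambda>i. omega (N+1) ^ (f (i mod N) * i)) (\<lambda>i. omega (N+1) ^ (g (i mod N) * i)) \<tau>
     = of_nat (N+1) * (\<Sum>a\<in>{a. a<N \<and> f a = g ((a+\<tau>) mod N)}. zeta (N+1) (- (int (g ((a+\<tau>) mod N)) * int \<tau>)))"
proof -
  define n where "n = N + 1"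
  define L where "L = N * n"
  have n0: "n > 0" by (simp add: n_def)
  define F where "F t = zeta n (int (f (t mod N)) * int t - int (g ((t+\<tau>) mod N)) * (int t + int \<tau>))" for t
  have step1: "pcorr L (\<lambda>i. omega n ^ (f (i mod N) * i)) (\<lambda>i. omega n ^ (g (i mod N) * i)) \<tau> = (\<Sum>t<L. F t)"
    unfolding pcorr_def
  proof (rule sum.cong[OF refl])
    fix t assume "t \<in> {..<L}"
    have m1: "(t + \<tau>) mod L mod N = (t + \<tau>) mod N" unfolding L_def
      by (simp add: mod_mod_cancel)
    have c0: "[(t + \<tau>) mod L = t + \<tau>] (mod n)" unfolding L_def cong_def
      by (simp add: mod_mod_cancel)
    have "[int ((t + \<tau>) mod L) = int (t + \<tau>)] (mod int n)" using c0 by (simp only: cong_int_iff)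
    hence c1: "[int ((t + \<tau>) mod L) = int t + int \<tau>] (mod int n)" by simp
    have "omega n ^ (f (t mod N) * t) * cnj (omega n ^ (g ((t + \<tau>) mod L mod N) * ((t + \<tau>) mod L)))
        = zeta n (int (f (t mod N)) * int t) * zeta n (- (int (g ((t + \<tau>) mod N)) * int ((t + \<tau>) mod L)))"
      by (simp add: omega_pow cnj_zeta m1)
    also have "zeta n (- (int (g ((t + \<tau>) mod N)) * int ((t + \<tau>) mod L))) = zeta n (- (int (g ((t + \<tau>) mod N)) * (int t + int \<tau>)))"
      by (rule zeta_cong[OF n0]) (intro cong_minus_minus_iff[THEN iffD2] cong_scalar_left c1)
    finally show "omega n ^ (f (t mod N) * t) * cnj (omega n ^ (g ((t + \<tau>) mod L mod N) * ((t + \<tau>) mod L))) = F t"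
      unfolding F_def by (simp add: zeta_add[symmetric])
  qed
  have step2: "(\<Sum>t<L. F t) = (\<Sum>a<N. \<Sum>s<n. F (s*N + a))"
  proof -
    have "(\<Sum>t<L. F t) = (\<Sum>s<n. \<Sum>a<N. F (s*N + a))" unfolding L_def by (rule sum_split_nat)
    also have "\<dots> = (\<Sum>a<N. \<Sum>s<n. F (s*N + a))" by (rule sum.swap)
    finally show ?thesis .
  qed
  have step4: "(\<Sum>s<n. F (s*N + a)) = (if f a = g ((a+\<tau>) mod N) then of_nat n * zeta n (- (int (g ((a+\<tau>) mod N)) * int \<tau>)) else 0)"
    if a: "a < N" for a
  proof -
    define a' where "a' = (a + \<tau>) mod N"
    define c where "c = int (f a) - int (g a')"
    define X where "X = c * int a - int (g a') * int \<tau>"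
    have "F (s*N + a) = zeta n X * zeta n ((c * int N) * int s)" for s
    proof -
      have "(s*N + a) mod N = a" using a by simp
      moreover have "(s*N + a + \<tau>) mod N = a'" unfolding a'_def
        by (metis add.assoc mod_mult_self3)
      ultimately have "F (s*N + a) = zeta n (int (f a) * int (s*N+a) - int (g a') * (int (s*N+a) + int \<tau>))"
        unfolding F_def by simp
      also have "int (f a) * int (s*N+a) - int (g a') * (int (s*N+a) + int \<tau>) = X + (c * int N) * int s"
        unfolding X_def c_def by (simp add: algebra_simps)
      finally show ?thesis by (simp add: zeta_add)
    qed
    hence "(\<Sum>s<n. F (s*N + a)) = zeta n X * (\<Sum>s<n. zeta n ((c * int N) * int s))"
      by (simp add: sum_distrib_left)
    also have "\<dots> = zeta n X * (if int n dvd c * int N then of_nat n else 0)"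
      by (simp add: zeta_geom[OF n0])
    also have "(int n dvd c * int N) \<longleftrightarrow> c = 0"
    proof
      assume "int n dvd c * int N"
      moreover have "coprime (int n) (int N)" unfolding n_def
        using coprime_add_one_left[of "int N"] by (simp add: add.commute)
      ultimately have d: "int n dvd c" using coprime_dvd_mult_left_iff by blast
      have "f a < N" "g a' < N" using f g a unfolding a'_def by auto
      hence "\<bar>c\<bar> < int n" unfolding c_def n_def by auto
      show "c = 0"
      proof (rule ccontr)
        assume "c \<noteq> 0"
        hence "\<bar>int n\<bar> \<le> \<bar>c\<bar>" using dvd_imp_le_int d by blast
        thus False using \<open>\<bar>c\<bar> < int n\<close> by simp
      qed
    qed simp
    finally show ?thesis unfolding c_def X_def a'_def by auto
  qed
  have "(\<Sum>t<L. F t) = (\<Sum>a<N. (if f a = g ((a+\<tau>) mod N) then of_nat n * zeta n (- (int (g ((a+\<tau>) mod N)) * int \<tau>)) else 0))"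
    using step2 step4 by simp
  also have "\<dots> = (\<Sum>a\<in>{a\<in>{..<N}. f a = g ((a+\<tau>) mod N)}. of_nat n * zeta n (- (int (g ((a+\<tau>) mod N)) * int \<tau>)))"
    by (simp only: sum.inter_filter[OF finite_lessThan])
  also have "{a\<in>{..<N}. f a = g ((a+\<tau>) mod N)} = {a. a<N \<and> f a = g ((a+\<tau>) mod N)}" by auto
  finally show ?thesis using step1 unfolding L_def n_def by (simp add: sum_distrib_left)
qed

lemma cfr_seq_eq: "cfr_seq N \<pi> m = (\<lambda>i. omega (N+1) ^ (\<pi> m (i mod N) * i))"
  by (rule ext) (simp add: cfr_seq_def)

lemma cfr_vals: assumes "cfr K N \<pi>" "m < K" "a < N" shows "\<pi> m a < N"
  using assms unfolding cfr_def bij_betw_def by blast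

lemma cfr_inj: assumes "cfr K N \<pi>" "m < K" shows "inj_on (\<pi> m) {..<N}"
  using assms unfolding cfr_def bij_betw_def by blast

lemma cfr_unique:
  assumes c: "cfr K N \<pi>" and m: "m < K" "m' < K" "m \<noteq> m'"
    and a: "a < N" "\<pi> m a = \<pi> m' ((a+\<tau>) mod N)"
    and b: "b < N" "\<pi> m b = \<pi> m' ((b+\<tau>) mod N)"
  shows "a = b"
proof (rule ccontr)
  assume ne: "a \<noteq> b"
  define s where "s = (b + N - a) mod N"
  have N0: "N > 0" using a by simp
  have s1: "s \<in> {1..<N}"
  proof -
    have "s < N" unfolding s_def using N0 by simp
    moreover have "s \<noteq> 0"
    proof
      assume "s = 0"
      hence "N dvd (b + N - a)" unfolding s_def by auto
      moreover have "0 < b + N - a" "b + N - a < 2 * N" using a b by auto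
      moreover obtain q where q: "b + N - a = N * q" using calculation(1) by blast
      ultimately have "N * q < N * 2" "0 < N * q" by (simp_all add: mult.commute)
      hence "q < 2" "q \<noteq> 0" by (simp_all add: mult_less_cancel1)
      hence "q = 1" by simp
      hence "b + N - a = N" using q by simp
      thus False using ne a b by simp
    qed
    ultimately show ?thesis by auto
  qed
  have e1: "(a + s) mod N = b"
  proof -
    have "(a + s) mod N = (a + (b + N - a)) mod N" unfolding s_def by (simp add: mod_add_right_eq)
    also have "a + (b + N - a) = b + N" using a by simp
    finally show ?thesis using b by simp
  qed
  have e2: "((a+\<tau>) mod N + s) mod N = (b+\<tau>) mod N"
  proof -
    have "((a+\<tau>) mod N + s) mod N = (a + \<tau> + (b + N - a)) mod N" unfolding s_def
      by (simp add: mod_add_eq)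
    also have "a + \<tau> + (b + N - a) = (b + \<tau>) + N" using a by simp
    finally show ?thesis by simp
  qed
  have "(\<pi> m a, \<pi> m ((a + s) mod N)) = (\<pi> m' ((a+\<tau>) mod N), \<pi> m' (((a+\<tau>) mod N + s) mod N))"
    using a b e1 e2 by simp
  moreover have "(a+\<tau>) mod N < N" using N0 by simp
  ultimately have "m = m'" using c s1 m a unfolding cfr_def by blast
  thus False using m by simp
qed

lemma auto_sum:
  assumes N: "N \<ge> 1" and t: "0 < \<tau>" "\<tau> < N*(N+1)" "N dvd \<tau>"
  shows "cmod (\<Sum>c<N. zeta (N+1) (- (int c * int \<tau>))) = 1"
proof -
  define n where "n = N + 1"
  have n0: "n > 0" by (simp add: n_def)
  have nd: "\<not> int n dvd - int \<tau>"
  proof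
    assume "int n dvd - int \<tau>"
    hence "n dvd \<tau>" by simp
    moreover have "coprime N n" unfolding n_def by simp
    ultimately have "N * n dvd \<tau>" using t(3) by (metis divides_mult)
    thus False using t unfolding n_def by (meson dvd_imp_le not_le)
  qed
  have "(\<Sum>c<n. zeta n (- int \<tau> * int c)) = 0" using zeta_geom[OF n0, of "- int \<tau>"] nd by simp
  hence "(\<Sum>c<N. zeta n (- (int c * int \<tau>))) + zeta n (- (int N * int \<tau>)) = 0"
    unfolding n_def by (simp add: mult.commute)
  hence "(\<Sum>c<N. zeta n (- (int c * int \<tau>))) = - zeta n (- (int N * int \<tau>))"
    by (simp add: eq_neg_iff_add_eq_0)
  thus ?thesis unfolding n_def by simp
qed

lemma corr_bound:
  assumes N: "N \<ge> 2" and c: "cfr K N \<pi>" and m: "m < K" "m' < K"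
    and t: "m = m' \<Longrightarrow> 0 < \<tau> \<and> \<tau> < N*(N+1)"
  shows "cmod (pcorr (N*(N+1)) (cfr_seq N \<pi> m) (cfr_seq N \<pi> m') \<tau>) \<le> real N + 1"
proof -
  define S where "S = {a. a<N \<and> \<pi> m a = \<pi> m' ((a+\<tau>) mod N)}"
  define Z where "Z = (\<Sum>a\<in>S. zeta (N+1) (- (int (\<pi> m' ((a+\<tau>) mod N)) * int \<tau>)))"
  have eq: "pcorr (N*(N+1)) (cfr_seq N \<pi> m) (cfr_seq N \<pi> m') \<tau> = of_nat (N+1) * Z"
    unfolding cfr_seq_eq Z_def S_def
    by (rule corr_formula) (use N cfr_vals[OF c] m in auto)
  have fS: "finite S" unfolding S_def by simp
  have "cmod Z \<le> 1"
  proof (cases "m = m' \<and> N dvd \<tau>")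
    case True
    hence "S = {..<N}" unfolding S_def by auto
    moreover have "(a+\<tau>) mod N = a" if "a<N" for a using True that
      by (metis dvd_imp_mod_0 mod_add_right_eq add_0_right mod_less)
    ultimately have "Z = (\<Sum>a<N. zeta (N+1) (- (int (\<pi> m a) * int \<tau>)))" unfolding Z_def using True
      by (intro sum.cong) auto
    also have "\<dots> = (\<Sum>c<N. zeta (N+1) (- (int c * int \<tau>)))"
      using cfr_inj[OF c m(1)] cfr_vals[OF c m(1)]
      by (intro sum.reindex_bij_betw) (use c m in \<open>auto simp: cfr_def\<close>)
    finally show ?thesis using auto_sum[of N \<tau>] N t True by simp
  next
    case False
    have "card S \<le> 1"
    proof (cases "m = m'")
      case True
      with False have nd: "\<not> N dvd \<tau>" by simp
      have "S = {}"
      proof -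
        { fix a assume a: "a < N" "\<pi> m a = \<pi> m ((a+\<tau>) mod N)"
          hence "a = (a+\<tau>) mod N" using cfr_inj[OF c m(1)] N by (auto simp: inj_on_def)
          hence "N dvd \<tau>"
            by (metis a(1) cong_def cong_add_lcancel_0_nat cong_0_iff mod_less)
          with nd have False by simp }
        thus ?thesis unfolding S_def using True by auto
      qed
      thus ?thesis by simp
    next
      case False
      have "\<forall>a\<in>S. \<forall>b\<in>S. a = b" unfolding S_def
        using cfr_unique[OF c m False] by blast
      thus ?thesis using card_le_Suc0_iff_eq[OF fS] by simp
    qed
    have "cmod Z \<le> (\<Sum>a\<in>S. cmod (zeta (N+1) (- (int (\<pi> m' ((a+\<tau>) mod N)) * int \<tau>))))"
      unfolding Z_def by (rule norm_sum)
    also have "\<dots> = real (card S)" by simp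
    finally show ?thesis using \<open>card S \<le> 1\<close> by linarith
  qed
  moreover have "cmod (of_nat (N+1)) = real N + 1" by (simp only: norm_of_nat)
  ultimately have "cmod (of_nat (N+1) * Z) \<le> real N + 1"
    unfolding norm_mult by (simp add: mult_left_le)
  thus ?thesis using eq by simp
qed

lemma corr_attained:
  assumes N: "N \<ge> 2" and c: "cfr K N \<pi>" and m: "0 < K"
  shows "cmod (pcorr (N*(N+1)) (cfr_seq N \<pi> 0) (cfr_seq N \<pi> 0) N) = real N + 1"
proof -
  define S where "S = {a. a<N \<and> \<pi> 0 a = \<pi> 0 ((a+N) mod N)}"
  define Z where "Z = (\<Sum>a\<in>S. zeta (N+1) (- (int (\<pi> 0 ((a+N) mod N)) * int N)))"
  have eq: "pcorr (N*(N+1)) (cfr_seq N \<pi> 0) (cfr_seq N \<pi> 0) N = of_nat (N+1) * Z"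
    unfolding cfr_seq_eq Z_def S_def
    by (rule corr_formula) (use N cfr_vals[OF c] m in auto)
  have "S = {..<N}" unfolding S_def by auto
  hence "Z = (\<Sum>a<N. zeta (N+1) (- (int (\<pi> 0 a) * int N)))" unfolding Z_def by simp
  also have "\<dots> = (\<Sum>c<N. zeta (N+1) (- (int c * int N)))"
    using cfr_inj[OF c m] cfr_vals[OF c m]
    by (intro sum.reindex_bij_betw) (use c m in \<open>auto simp: cfr_def\<close>)
  finally have "cmod Z = 1" using auto_sum[of N N] N by simp
  moreover have "cmod (of_nat (N+1)) = real N + 1" by (simp only: norm_of_nat)
  ultimately show ?thesis unfolding eq norm_mult by simp
qed

lemma theta_max_eq:
  assumes N: "N \<ge> 2" and K: "0 < K" and c: "cfr K N \<pi>"
  shows "theta_max N K \<pi> = real N + 1"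
proof -
  define L where "L = N * (N+1)"
  define A where "A = {cmod (pcorr L (cfr_seq N \<pi> m) (cfr_seq N \<pi> m) \<tau>) | m \<tau>. m < K \<and> 0 < \<tau> \<and> \<tau> < L}"
  define B where "B = {cmod (pcorr L (cfr_seq N \<pi> m) (cfr_seq N \<pi> m') \<tau>) | m m' \<tau>.
              m < K \<and> m' < K \<and> m \<noteq> m' \<and> \<tau> < L}"
  have "A \<subseteq> (\<lambda>(m,\<tau>). cmod (pcorr L (cfr_seq N \<pi> m) (cfr_seq N \<pi> m) \<tau>)) ` ({..<K} \<times> {..<L})"
    unfolding A_def by auto
  hence fA: "finite A" by (rule finite_subset) simp
  have "B \<subseteq> (\<lambda>(m,m',\<tau>). cmod (pcorr L (cfr_seq N \<pi> m) (cfr_seq N \<pi> m') \<tau>)) ` ({..<K} \<times> {..<K} \<times> {..<L})"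
    unfolding B_def by force
  hence fB: "finite B" by (rule finite_subset) simp
  have le: "\<forall>y\<in>A \<union> B. y \<le> real N + 1"
    unfolding A_def B_def L_def using corr_bound[OF N c] by auto
  have "0 < N" "N < L" using N unfolding L_def by auto
  hence "real N + 1 \<in> A" unfolding A_def L_def using corr_attained[OF N c K] K
    by (metis (mono_tags, lifting) mem_Collect_eq)
  hence "Max (A \<union> B) = real N + 1"
    using fA fB le by (intro Max_eqI) auto
  thus ?thesis unfolding theta_max_def Let_def A_def B_def L_def by simp
qed

lemma cfr_le: assumes N: "N \<ge> 2" and c: "cfr M N \<pi>" shows "M \<le> N"
proof -
  define h where "h = (\<lambda>(i,x). (\<pi> i x, \<pi> i ((x + 1) mod N)))"
  have "inj_on h ({..<M} \<times> {..<N})"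
  proof (rule inj_onI)
    fix p q assume p: "p \<in> {..<M} \<times> {..<N}" and q: "q \<in> {..<M} \<times> {..<N}" and hpq: "h p = h q"
    obtain i x where px: "p = (i,x)" by (cases p)
    obtain j y where qy: "q = (j,y)" by (cases q)
    have ix: "i < M" "x < N" using p px by auto
    have jy: "j < M" "y < N" using q qy by auto
    have one: "(1::nat) \<in> {1..<N}" using N by auto
    have iff: "(\<pi> i x, \<pi> i ((x+1) mod N)) = (\<pi> j y, \<pi> j ((y+1) mod N)) \<longleftrightarrow> (i = j \<and> x = y)"
      using c ix jy one unfolding cfr_def by blast
    have eq: "(\<pi> i x, \<pi> i ((x+1) mod N)) = (\<pi> j y, \<pi> j ((y+1) mod N))"
      using hpq px qy unfolding h_def by simp
    show "p = q" using iff eq px qy by simp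
  qed
  moreover have "h ` ({..<M} \<times> {..<N}) \<subseteq> {..<N} \<times> {..<N}"
    unfolding h_def using cfr_vals[OF c] N by auto
  ultimately have "card ({..<M} \<times> {..<N}) \<le> card ({..<N} \<times> {..<N})"
    by (meson card_inj_on_le finite_SigmaI finite_lessThan)
  hence "M * N \<le> N * N" by (simp add: card_cartesian_product)
  thus ?thesis using N by simp
qed

lemma cfr_construct:
  assumes N: "N \<ge> 2" and cop: "\<forall>d. 0 < d \<longrightarrow> d < P \<longrightarrow> coprime d N"
  shows "cfr (P - 1) N (\<lambda>i x. (Suc i * x) mod N)"
  unfolding cfr_def
proof (intro conjI allI impI ballI)
  fix i assume i: "i < P - 1"
  have ci: "coprime (Suc i) N" using cop i by simp
  have inj: "inj_on (\<lambda>x. (Suc i * x) mod N) {..<N}"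
  proof (rule inj_onI)
    fix x y assume "x \<in> {..<N}" "y \<in> {..<N}" "(Suc i * x) mod N = (Suc i * y) mod N"
    thus "x = y" using cong_mult_lcancel_nat[OF ci] by (simp add: cong_def)
  qed
  moreover have "(\<lambda>x. (Suc i * x) mod N) ` {..<N} \<subseteq> {..<N}" using N by auto
  ultimately show "bij_betw (\<lambda>x. (Suc i * x) mod N) {..<N} {..<N}"
    by (simp add: bij_betw_def endo_inj_surj)
next
  fix m i j x y assume m: "m \<in> {1..<N}" and i: "i < P - 1" and j: "j < P - 1" and x: "x < N" and y: "y < N"
  have ci: "coprime (Suc i) N" using cop i by simp
  show "((Suc i * x) mod N, (Suc i * ((x + m) mod N)) mod N) = ((Suc j * y) mod N, (Suc j * ((y + m) mod N)) mod N)
        \<longleftrightarrow> i = j \<and> x = y"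
  proof
    assume h: "((Suc i * x) mod N, (Suc i * ((x + m) mod N)) mod N) = ((Suc j * y) mod N, (Suc j * ((y + m) mod N)) mod N)"
    have h1: "[Suc i * x = Suc j * y] (mod N)" using h by (simp add: cong_def)
    have h2a: "(Suc i * ((x + m) mod N)) mod N = (Suc j * ((y + m) mod N)) mod N"
      using h by (simp only: prod.inject)
    have h2: "[Suc i * (x + m) = Suc j * (y + m)] (mod N)" using h2a
      unfolding cong_def by (simp only: mod_mult_right_eq)
    have h1': "[int (Suc i) * int x = int (Suc j) * int y] (mod int N)" using h1
      by (metis cong_int_iff of_nat_mult)
    have h2': "[int (Suc i) * (int x + int m) = int (Suc j) * (int y + int m)] (mod int N)" using h2
      by (metis cong_int_iff of_nat_mult of_nat_add)
    have "[int (Suc i) * int m = int (Suc j) * int m] (mod int N)"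
    proof -
      have "[int (Suc i) * int x + int (Suc i) * int m = int (Suc j) * int y + int (Suc j) * int m] (mod int N)"
        using h2' by (simp add: distrib_left)
      thus ?thesis using h1' cong_add_lcancel cong_trans cong_sym by (metis cong_add_rcancel add.commute)
    qed
    hence dv0: "int N dvd int (Suc i) * int m - int (Suc j) * int m"
      by (simp only: cong_iff_dvd_diff)
    have "int (Suc i) * int m - int (Suc j) * int m = (int i - int j) * int m"
      by (simp add: algebra_simps)
    hence dv: "int N dvd (int i - int j) * int m" using dv0 by simp
    have ij: "i = j"
    proof (rule ccontr)
      assume "i \<noteq> j"
      define d where "d = nat \<bar>int i - int j\<bar>"
      have "0 < d" "d < P" unfolding d_def using \<open>i \<noteq> j\<close> i j by auto
      hence "coprime d N" using cop by simp
      hence "coprime (int d) (int N)" by simp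
      moreover have "int d = \<bar>int i - int j\<bar>" unfolding d_def by simp
      ultimately have "coprime (int i - int j) (int N)" by simp
      hence "int N dvd int m" using dv by (metis coprime_commute coprime_dvd_mult_right_iff)
      hence "N dvd m" by simp
      thus False using m by (auto dest: dvd_imp_le)
    qed
    hence "x = y" using h1 cong_mult_lcancel_nat[OF ci] x y by (simp add: cong_def)
    thus "i = j \<and> x = y" using ij by simp
  qed simp
qed

lemma cfr_max_ge:
  assumes N: "N \<ge> 2" and cop: "\<forall>d. 0 < d \<longrightarrow> d < P \<longrightarrow> coprime d N"
  shows "P - 1 \<le> cfr_max N"
proof -
  have "{M. \<exists>\<pi>. cfr M N \<pi>} \<subseteq> {..N}" using cfr_le[OF N] by auto
  hence "finite {M. \<exists>\<pi>. cfr M N \<pi>}" by (rule finite_subset) simp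
  moreover have "P - 1 \<in> {M. \<exists>\<pi>. cfr M N \<pi>}" using cfr_construct[OF N cop] by blast
  ultimately show ?thesis unfolding cfr_max_def by (rule Max_ge)
qed

lemma ratio_bound:
  assumes N: "N \<ge> 2" and K: "K \<ge> 2"
  shows "\<bar>(real N + 1) / theta_opti K (N * (N + 1)) N - 1\<bar> \<le> 1 / (real K - 1)"
proof -
  define n where "n = real N"
  define k where "k = real K"
  have n2: "n \<ge> 2" and k2: "k \<ge> 2" using N K unfolding n_def k_def by auto
  define L where "L = n * (n + 1)"
  define X where "X = k * L - n^2"
  define Y where "Y = k * L - 1"
  have Xpos: "X > 0" unfolding X_def L_def using n2 k2
    by (smt (verit) mult_le_cancel_right1 mult_nonneg_nonneg power2_eq_square distrib_left)
  have XY: "X \<le> Y" unfolding X_def Y_def using n2 by (smt (verit) one_le_power)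
  have "theta_opti K (N * (N + 1)) N = L * sqrt (X / (n^2 * Y))"
    unfolding theta_opti_def L_def X_def Y_def n_def k_def
    by (simp add: algebra_simps power2_eq_square)
  also have "\<dots> = (n + 1) * sqrt (X / Y)"
    using n2 by (simp add: real_sqrt_divide real_sqrt_mult L_def)
  finally have to: "theta_opti K (N * (N + 1)) N = (n + 1) * sqrt (X / Y)" .
  have Ypos: "Y > 0" using Xpos XY by simp
  define r where "r = sqrt (Y / X)"
  have ratio: "(real N + 1) / theta_opti K (N * (N + 1)) N = r"
    unfolding to r_def n_def[symmetric] using n2 Xpos Ypos
    by (simp add: real_sqrt_divide)
  have r1: "r \<ge> 1" unfolding r_def using XY Xpos by simp
  have r2: "r^2 = Y / X" unfolding r_def using Xpos Ypos by simp
  have "r * 1 \<le> r * r" using r1 by (intro mult_left_mono) auto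
  hence "r - 1 \<le> r^2 - 1" by (simp add: power2_eq_square)
  also have "r^2 - 1 = (n^2 - 1) / X" using r2 Xpos unfolding X_def Y_def by (simp add: field_simps)
  also have "\<dots> \<le> 1 / (k - 1)"
  proof -
    have "(n^2 - 1) * (k - 1) \<le> X" unfolding X_def L_def using n2 k2
      by (simp add: algebra_simps power2_eq_square) (smt (verit) mult_nonneg_nonneg)
    thus ?thesis using Xpos k2 by (simp add: divide_simps)
  qed
  finally show ?thesis using ratio r1 unfolding k_def by simp
qed

lemma tends_from_lb:
  assumes "\<And>B. \<exists>N0. \<forall>N\<in>S. N \<ge> N0 \<longrightarrow> N \<ge> 2 \<and> B \<le> cfr_max N"
  shows "ratio_tends_to_1 S"
  unfolding ratio_tends_to_1_def
proof (intro allI impI)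
  fix \<epsilon> :: real assume e: "\<epsilon> > 0"
  define B where "B = nat \<lceil>1/\<epsilon>\<rceil> + 2"
  obtain N0 where N0: "\<forall>N\<in>S. N \<ge> N0 \<longrightarrow> N \<ge> 2 \<and> B \<le> cfr_max N" using assms by blast
  show "\<exists>N0. \<forall>N\<in>S. N0 \<le> N \<longrightarrow> (\<forall>\<pi>. cfr (cfr_max N) N \<pi> \<longrightarrow>
     \<bar>theta_max N (cfr_max N) \<pi> / theta_opti (cfr_max N) (N * (N + 1)) N - 1\<bar> < \<epsilon>)"
  proof (intro exI[of _ N0] ballI impI allI)
    fix N \<pi> assume N: "N \<in> S" "N0 \<le> N" and c: "cfr (cfr_max N) N \<pi>"
    define K where "K = cfr_max N"
    have N2: "N \<ge> 2" and BK: "B \<le> K" using N0 N unfolding K_def by auto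
    have K2: "K \<ge> 2" using BK unfolding B_def by simp
    have "theta_max N K \<pi> = real N + 1" using theta_max_eq[OF N2 _ ] c K2 unfolding K_def by simp
    hence "\<bar>theta_max N K \<pi> / theta_opti K (N * (N + 1)) N - 1\<bar> \<le> 1 / (real K - 1)"
      using ratio_bound[OF N2 K2] by simp
    also have "1 / (real K - 1) < \<epsilon>"
    proof -
      have "real K - 1 \<ge> real B - 1" using BK by simp
      moreover have "real B - 1 > 1 / \<epsilon>" unfolding B_def by linarith
      ultimately have "real K - 1 > 1/\<epsilon>" by linarith
      thus ?thesis using e by (simp add: divide_simps mult.commute)
    qed
    finally show "\<bar>theta_max N (cfr_max N) \<pi> / theta_opti (cfr_max N) (N * (N + 1)) N - 1\<bar> < \<epsilon>"
      unfolding K_def .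
  qed
qed

lemma coprime_small_prime:
  fixes d q :: nat assumes "prime q" "0 < d" "d < q" shows "coprime d q"
proof -
  have "\<not> q dvd d" using assms by (auto dest: dvd_imp_le)
  thus ?thesis using prime_imp_coprime[OF assms(1)] coprime_commute by blast
qed

theorem corollary1:
  fixes k :: nat and H :: "nat set"
  assumes "k > 0" and "admissible H"
  shows "ratio_tends_to_1 {p. prime p \<and> odd p}
       \<and> ratio_tends_to_1 {p * (p + k) | p. prime p \<and> prime (p + k) \<and> odd p \<and> odd (p + k)}
       \<and> ratio_tends_to_1 {\<Prod>j\<in>H. (m + j) | m. \<forall>j\<in>H. prime (m + j) \<and> odd (m + j)}"
proof (intro conjI)
  show "ratio_tends_to_1 {p. prime p \<and> odd p}"
  proof (rule tends_from_lb)
    fix B show "\<exists>N0. \<forall>N\<in>{p. prime p \<and> odd p}. N \<ge> N0 \<longrightarrow> N \<ge> 2 \<and> B \<le> cfr_max N"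
    proof (intro exI[of _ "B+2"] ballI impI)
      fix N assume N: "N \<in> {p. prime p \<and> odd p}" "B + 2 \<le> N"
      have "\<forall>d. 0 < d \<longrightarrow> d < N \<longrightarrow> coprime d N" using N coprime_small_prime by auto
      hence "N - 1 \<le> cfr_max N" using N by (intro cfr_max_ge) auto
      thus "N \<ge> 2 \<and> B \<le> cfr_max N" using N by auto
    qed
  qed
next
  show "ratio_tends_to_1 {p * (p + k) | p. prime p \<and> prime (p + k) \<and> odd p \<and> odd (p + k)}"
  proof (rule tends_from_lb)
    fix B show "\<exists>N0. \<forall>N\<in>{p * (p + k) | p. prime p \<and> prime (p + k) \<and> odd p \<and> odd (p + k)}.
       N \<ge> N0 \<longrightarrow> N \<ge> 2 \<and> B \<le> cfr_max N"
    proof (intro exI[of _ "(B+1)*(B+1+k)+2"] ballI impI)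
      fix N assume N: "N \<in> {p * (p + k) | p. prime p \<and> prime (p + k) \<and> odd p \<and> odd (p + k)}"
        and N0: "(B+1)*(B+1+k)+2 \<le> N"
      then obtain p where p: "N = p * (p + k)" "prime p" "prime (p + k)" by blast
      have pB: "p \<ge> B + 1"
      proof (rule ccontr)
        assume "\<not> p \<ge> B + 1"
        hence "p * (p + k) \<le> (B+1) * (B+1+k)" by (intro mult_mono) auto
        thus False using N0 p by simp
      qed
      have p2: "p \<ge> 2" using p prime_ge_2_nat by blast
      have N2: "N \<ge> 2" using N0 by simp
      have "\<forall>d. 0 < d \<longrightarrow> d < p \<longrightarrow> coprime d N"
        using p coprime_small_prime by (auto simp: coprime_mult_right_iff)
      hence "p - 1 \<le> cfr_max N" using N2 by (intro cfr_max_ge) auto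
      thus "N \<ge> 2 \<and> B \<le> cfr_max N" using N2 pB by auto
    qed
  qed
next
  have fH: "finite H" using assms(2) unfolding admissible_def by blast
  show "ratio_tends_to_1 {\<Prod>j\<in>H. (m + j) | m. \<forall>j\<in>H. prime (m + j) \<and> odd (m + j)}"
  proof (rule tends_from_lb)
    fix B show "\<exists>N0. \<forall>N\<in>{\<Prod>j\<in>H. (m + j) | m. \<forall>j\<in>H. prime (m + j) \<and> odd (m + j)}.
       N \<ge> N0 \<longrightarrow> N \<ge> 2 \<and> B \<le> cfr_max N"
    proof (intro exI[of _ "(B + 1 + Max H) ^ card H + 2"] ballI impI)
      fix N assume N: "N \<in> {\<Prod>j\<in>H. (m + j) | m. \<forall>j\<in>H. prime (m + j) \<and> odd (m + j)}"
        and N0: "(B + 1 + Max H) ^ card H + 2 \<le> N"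
      then obtain m where m: "N = (\<Prod>j\<in>H. (m + j))" "\<forall>j\<in>H. prime (m + j)" by blast
      have N2: "N \<ge> 2" using N0 by simp
      have mB: "m \<ge> B + 1"
      proof (rule ccontr)
        assume "\<not> m \<ge> B + 1"
        hence mm: "m \<le> B" by simp
        have "\<forall>j\<in>H. m + j \<le> B + 1 + Max H"
        proof
          fix j assume "j \<in> H"
          hence "j \<le> Max H" using Max_ge[OF fH] by blast
          thus "m + j \<le> B + 1 + Max H" using mm by simp
        qed
        hence "(\<Prod>j\<in>H. (m + j)) \<le> (\<Prod>j\<in>H. (B + 1 + Max H))"
          by (intro prod_mono) auto
        also have "\<dots> = (B + 1 + Max H) ^ card H" by simp
        finally show False using N0 m by simp
      qed
      have "\<forall>d. 0 < d \<longrightarrow> d < m \<longrightarrow> coprime d N"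
      proof (intro allI impI)
        fix d :: nat assume d: "0 < d" "d < m"
        show "coprime d N" unfolding m(1)
        proof (rule prod_coprime_right)
          fix j assume "j \<in> H"
          thus "coprime d (m + j)" using m(2) d coprime_small_prime by simp
        qed
      qed
      hence "m - 1 \<le> cfr_max N" using N2 by (intro cfr_max_ge) auto
      thus "N \<ge> 2 \<and> B \<le> cfr_max N" using N2 mB by auto
    qed
  qed
qed

end
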